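(* Suppose $\hat R\ge\frac{5r}{4}+\sigma\sqrt{2\ln(8d)}$ and $r\ge2\sigma$. Then the $\hat R$-truncated $\sigma$-perturbed adversary $\mathcal{A}'_\sigma$ has $\left(r,\frac{\sigma^2}{r},\frac{1}{80}\right)$ margins.
   Context: Multiple parameter setting with Greedy maintaining per-arm least squares estimates $\hat\beta_i^t$. Given an adaptive adversary choosing $\mu_1^t,\dots,\mu_k^t$ ($\|\mu_i^t\|\le1$) from the history, $\mathcal{A}'_\sigma$ outputs contexts $x_i^t=\mu_i^t+(Q_i^t)^{-1}z_i^t$, where $Q_i^t$ is orthonormal with $Q_i^t\hat\beta_i^t=(\|\hat\beta_i^t\|,0,\dots,0)$ and the coordinates of $z_i^t\in\mathbb{R}^d$ are independent $\mathcal{N}(0,\sigma^2)$ variables conditioned on lying in $[-\hat R,\hat R]$. A distribution $\mathcal{D}$ has $(r,\alpha,\gamma)$ margins if for all $\beta\ne0$ and $b\le r\|\beta\|$, with $e\sim\mathcal{D}$, $\Pr[\beta\cdot e>b+\alpha\|\beta\|\mid\beta\cdot e\ge b]\ge\gamma$; the adversary has $(r,\alpha,\gamma)$ margins if the distribution of every perturbation $(Q_i^t)^{-1}z_i^t$ (for every history) does. *)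

theory Defs
  imports "HOL-Probability.Probability"
begin

definition trunc_normal :: "real \<Rightarrow> real \<Rightarrow> real measure" where
  "trunc_normal \<sigma> R = density lborel (\<lambda>x. ennreal
      (indicator {-R..R} x * normal_density 0 \<sigma> x /
       measure (density lborel (\<lambda>y. ennreal (normal_density 0 \<sigma> y))) {-R..R}))"

definition perturbation_distr :: "real \<Rightarrow> real \<Rightarrow> real^('d::finite)^'d \<Rightarrow> (real^'d) measure" where
  "perturbation_distr \<sigma> R Q =
     distr (PiM UNIV (\<lambda>_::'d. trunc_normal \<sigma> R)) borel
       (\<lambda>z. matrix_inv Q *v (\<chi> i. z i))"

definition has_margins :: "('a::real_inner) measure \<Rightarrow> real \<Rightarrow> real \<Rightarrow> real \<Rightarrow> bool" where
  "has_margins D r \<alpha> \<gamma> \<longleftrightarrow>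
     (\<forall>\<beta>. \<beta> \<noteq> 0 \<longrightarrow> (\<forall>b. b \<le> r * norm \<beta> \<longrightarrow>
        cond_prob D (\<lambda>e. \<beta> \<bullet> e > b + \<alpha> * norm \<beta>) (\<lambda>e. \<beta> \<bullet> e \<ge> b) \<ge> \<gamma>))"

definition adversary_has_margins :: "real \<Rightarrow> real \<Rightarrow> ('d::finite) itself \<Rightarrow> real \<Rightarrow> real \<Rightarrow> real \<Rightarrow> bool" where
  "adversary_has_margins \<sigma> R _ r \<alpha> \<gamma> \<longleftrightarrow>
     (\<forall>Q::real^'d^'d. orthogonal_matrix Q \<longrightarrow> has_margins (perturbation_distr \<sigma> R Q) r \<alpha> \<gamma>)"

end

theory Submission
  imports Defs
begin

abbreviation Nd :: "real \<Rightarrow> real measure" where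
  "Nd \<sigma> \<equiv> density lborel (\<lambda>x. ennreal (normal_density 0 \<sigma> x))"

lemma Nd_prob: "0 < \<sigma> \<Longrightarrow> prob_space (Nd \<sigma>)"
  by (rule prob_space_normal_density) simp

lemma normal_density_shift:
  "normal_density 0 \<sigma> (x + t) = normal_density 0 \<sigma> x * exp (- (2*x*t + t\<^sup>2) / (2*\<sigma>\<^sup>2))"
proof -
  have e: "- (x + t)\<^sup>2 / (2 * \<sigma>\<^sup>2) = - x\<^sup>2 / (2 * \<sigma>\<^sup>2) + - (2*x*t + t\<^sup>2) / (2*\<sigma>\<^sup>2)"
    by (simp add: power2_eq_square add_divide_distrib[symmetric] algebra_simps)
  have "exp (- (x + t)\<^sup>2 / (2 * \<sigma>\<^sup>2)) = exp (- x\<^sup>2 / (2 * \<sigma>\<^sup>2)) * exp (- (2*x*t + t\<^sup>2) / (2*\<sigma>\<^sup>2))"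
    unfolding e exp_add ..
  then show ?thesis unfolding normal_density_def by (simp only: diff_zero mult.assoc)
qed

lemma Nd_shift:
  "emeasure (Nd \<sigma>) {s+t<..} = (\<integral>\<^sup>+x. ennreal (normal_density 0 \<sigma> (x+t)) * indicator {s<..} x \<partial>lborel)"
proof -
  have "emeasure (Nd \<sigma>) {s+t<..} = (\<integral>\<^sup>+x. ennreal (normal_density 0 \<sigma> x) * indicator {s+t<..} x \<partial>lborel)"
    by (subst emeasure_density) auto
  also have "\<dots> = ennreal \<bar>1\<bar> * (\<integral>\<^sup>+x. ennreal (normal_density 0 \<sigma> (t + 1*x)) * indicator {s+t<..} (t + 1*x) \<partial>lborel)"
    by (rule nn_integral_real_affine) auto
  also have "\<dots> = (\<integral>\<^sup>+x. ennreal (normal_density 0 \<sigma> (x+t)) * indicator {s<..} x \<partial>lborel)"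
    by (auto intro!: nn_integral_cong simp: indicator_def add.commute)
  finally show ?thesis .
qed

lemma Nd_upper:
  assumes "0 < \<sigma>" "0 \<le> t"
  shows "measure (Nd \<sigma>) {s+t<..} \<le> exp (- (s*t + t\<^sup>2/2) / \<sigma>\<^sup>2) * measure (Nd \<sigma>) {s<..}"
proof -
  interpret prob_space "Nd \<sigma>" using Nd_prob assms by blast
  have "emeasure (Nd \<sigma>) {s+t<..} = (\<integral>\<^sup>+x. ennreal (normal_density 0 \<sigma> (x+t)) * indicator {s<..} x \<partial>lborel)"
    by (rule Nd_shift)
  also have "\<dots> \<le> (\<integral>\<^sup>+x. ennreal (exp (- (s*t + t\<^sup>2/2) / \<sigma>\<^sup>2)) * (ennreal (normal_density 0 \<sigma> x) * indicator {s<..} x) \<partial>lborel)"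
  proof (intro nn_integral_mono)
    fix x :: real
    show "ennreal (normal_density 0 \<sigma> (x+t)) * indicator {s<..} x \<le> ennreal (exp (- (s*t + t\<^sup>2/2) / \<sigma>\<^sup>2)) * (ennreal (normal_density 0 \<sigma> x) * indicator {s<..} x)"
    proof (cases "s < x")
      case True
      have "s*t + t\<^sup>2/2 \<le> x*t + t\<^sup>2/2" using True assms mult_right_mono[of s x t] by auto
      then have "(s*t + t\<^sup>2/2)/\<sigma>\<^sup>2 \<le> (x*t + t\<^sup>2/2)/\<sigma>\<^sup>2" by (simp add: divide_right_mono)
      moreover have "- (2*x*t + t\<^sup>2) / (2*\<sigma>\<^sup>2) = - ((x*t + t\<^sup>2/2)/\<sigma>\<^sup>2)" by (cases "\<sigma> = 0") (simp_all add: field_simps)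
      ultimately have "exp (- (2*x*t + t\<^sup>2) / (2*\<sigma>\<^sup>2)) \<le> exp (- (s*t + t\<^sup>2/2) / \<sigma>\<^sup>2)"
        by (simp only: exp_le_cancel_iff minus_divide_left[symmetric])
      then have "normal_density 0 \<sigma> (x+t) \<le> exp (- (s*t + t\<^sup>2/2) / \<sigma>\<^sup>2) * normal_density 0 \<sigma> x"
        unfolding normal_density_shift
        by (metis mult.commute mult_right_mono normal_density_nonneg)
      then show ?thesis using True
        by (simp add: ennreal_mult'[symmetric] normal_density_nonneg)
    qed simp
  qed
  also have "\<dots> = ennreal (exp (- (s*t + t\<^sup>2/2) / \<sigma>\<^sup>2)) * emeasure (Nd \<sigma>) {s<..}"
    by (subst nn_integral_cmult) (auto simp: emeasure_density)
  finally show ?thesis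
    by (simp add: emeasure_eq_measure ennreal_mult'[symmetric])
qed

lemma Nd_lower:
  assumes "0 < \<sigma>" "0 \<le> t" "0 \<le> M"
  shows "measure (Nd \<sigma>) {s+t<..} \<ge> exp (- (t*(s+M) + t\<^sup>2/2) / \<sigma>\<^sup>2) * (measure (Nd \<sigma>) {s<..} - measure (Nd \<sigma>) {s+M<..})"
proof -
  interpret prob_space "Nd \<sigma>" using Nd_prob assms by blast
  have eqd: "measure (Nd \<sigma>) {s<..} - measure (Nd \<sigma>) {s+M<..} = measure (Nd \<sigma>) {s<..s+M}"
  proof -
    have "{s<..s+M} = {s<..} - {s+M<..}" by auto
    moreover have "{s+M<..} \<subseteq> {s<..}" using assms by auto
    ultimately show ?thesis by (simp add: finite_measure_Diff)
  qed
  have "ennreal (exp (- (t*(s+M) + t\<^sup>2/2) / \<sigma>\<^sup>2)) * emeasure (Nd \<sigma>) {s<..s+M}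
      = (\<integral>\<^sup>+x. ennreal (exp (- (t*(s+M) + t\<^sup>2/2) / \<sigma>\<^sup>2)) * (ennreal (normal_density 0 \<sigma> x) * indicator {s<..s+M} x) \<partial>lborel)"
    by (subst nn_integral_cmult) (auto simp: emeasure_density)
  also have "\<dots> \<le> (\<integral>\<^sup>+x. ennreal (normal_density 0 \<sigma> (x+t)) * indicator {s<..} x \<partial>lborel)"
  proof (intro nn_integral_mono)
    fix x :: real
    show "ennreal (exp (- (t*(s+M) + t\<^sup>2/2) / \<sigma>\<^sup>2)) * (ennreal (normal_density 0 \<sigma> x) * indicator {s<..s+M} x) \<le> ennreal (normal_density 0 \<sigma> (x+t)) * indicator {s<..} x"
    proof (cases "s < x \<and> x \<le> s + M")
      case True
      have "x*t + t\<^sup>2/2 \<le> t*(s+M) + t\<^sup>2/2" using True assms mult_right_mono[of x "s+M" t] by (auto simp: mult.commute)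
      then have "(x*t + t\<^sup>2/2)/\<sigma>\<^sup>2 \<le> (t*(s+M) + t\<^sup>2/2)/\<sigma>\<^sup>2" by (simp add: divide_right_mono)
      moreover have "- (2*x*t + t\<^sup>2) / (2*\<sigma>\<^sup>2) = - ((x*t + t\<^sup>2/2)/\<sigma>\<^sup>2)" by (cases "\<sigma> = 0") (simp_all add: field_simps)
      ultimately have "exp (- (t*(s+M) + t\<^sup>2/2) / \<sigma>\<^sup>2) \<le> exp (- (2*x*t + t\<^sup>2) / (2*\<sigma>\<^sup>2))"
        by (simp only: exp_le_cancel_iff minus_divide_left[symmetric])
      then have "exp (- (t*(s+M) + t\<^sup>2/2) / \<sigma>\<^sup>2) * normal_density 0 \<sigma> x \<le> normal_density 0 \<sigma> (x+t)"
        unfolding normal_density_shift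
        by (metis mult.commute mult_right_mono normal_density_nonneg)
      then show ?thesis using True
        by (simp add: ennreal_mult'[symmetric] normal_density_nonneg)
    qed auto
  qed
  also have "\<dots> = emeasure (Nd \<sigma>) {s+t<..}" by (rule Nd_shift[symmetric])
  finally show ?thesis
    by (simp add: emeasure_eq_measure ennreal_mult'[symmetric] eqd)
qed

lemma Nd_reflect:
  assumes "0 < \<sigma>"
  shows "measure (Nd \<sigma>) {..<-s} = measure (Nd \<sigma>) {s<..}"
proof -
  have "emeasure (Nd \<sigma>) {..<-s} = (\<integral>\<^sup>+x. ennreal (normal_density 0 \<sigma> x) * indicator {..<-s} x \<partial>lborel)"
    by (subst emeasure_density) auto
  also have "\<dots> = ennreal \<bar>-1\<bar> * (\<integral>\<^sup>+x. ennreal (normal_density 0 \<sigma> (0 + -1*x)) * indicator {..<-s} (0 + -1*x) \<partial>lborel)"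
    by (rule nn_integral_real_affine) auto
  also have "\<dots> = (\<integral>\<^sup>+x. ennreal (normal_density 0 \<sigma> x) * indicator {s<..} x \<partial>lborel)"
    by (auto intro!: nn_integral_cong simp: indicator_def normal_density_def)
  also have "\<dots> = emeasure (Nd \<sigma>) {s<..}"
    by (subst emeasure_density) auto
  finally show ?thesis by (simp add: measure_def)
qed

lemma Nd_singleton: "emeasure (Nd \<sigma>) {s} = 0"
proof -
  have "emeasure (Nd \<sigma>) {s} = (\<integral>\<^sup>+x. ennreal (normal_density 0 \<sigma> x) * indicator {s} x \<partial>lborel)"
    by (subst emeasure_density) auto
  also have "\<dots> = 0"
    by (rule nn_integral_null_set) (simp add: null_sets_def)
  finally show ?thesis by simp
qed

lemma Nd_closed:
  assumes "0 < \<sigma>"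
  shows "measure (Nd \<sigma>) {s..} = measure (Nd \<sigma>) {s<..}"
proof -
  interpret prob_space "Nd \<sigma>" using Nd_prob assms by blast
  have "{s..} = {s} \<union> {s<..}" by auto
  moreover have "measure (Nd \<sigma>) ({s} \<union> {s<..}) = measure (Nd \<sigma>) {s} + measure (Nd \<sigma>) {s<..}"
    by (rule finite_measure_Union) auto
  ultimately have "measure (Nd \<sigma>) {s..} = measure (Nd \<sigma>) {s} + measure (Nd \<sigma>) {s<..}"
    by simp
  then show ?thesis using Nd_singleton[of \<sigma> s] by (simp add: measure_def)
qed

lemma Nd_half:
  assumes "0 < \<sigma>"
  shows "measure (Nd \<sigma>) {0<..} = 1/2"
proof -
  interpret prob_space "Nd \<sigma>" using Nd_prob assms by blast
  have "UNIV = {..<0} \<union> ({0::real} \<union> {0<..})" by auto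
  then have "1 = measure (Nd \<sigma>) {..<0} + (measure (Nd \<sigma>) {0} + measure (Nd \<sigma>) {0<..})"
  proof -
    have a: "measure (Nd \<sigma>) ({0::real} \<union> {0<..}) = measure (Nd \<sigma>) {0} + measure (Nd \<sigma>) {0<..}"
      by (rule finite_measure_Union) auto
    have b: "measure (Nd \<sigma>) ({..<0} \<union> ({0::real} \<union> {0<..})) = measure (Nd \<sigma>) {..<0} + measure (Nd \<sigma>) ({0} \<union> {0<..})"
      by (rule finite_measure_Union) auto
    show ?thesis using prob_space \<open>UNIV = _\<close> a b by simp
  qed
  then show ?thesis using Nd_singleton[of \<sigma> 0] Nd_reflect[OF assms, of 0] by (simp add: measure_def)
qed

abbreviation Qo :: "real \<Rightarrow> real \<Rightarrow> real" where
  "Qo \<sigma> t \<equiv> measure (Nd \<sigma>) {t<..}"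

lemma Qo_anti: "0 < \<sigma> \<Longrightarrow> s \<le> t \<Longrightarrow> Qo \<sigma> t \<le> Qo \<sigma> s"
proof -
  assume "0 < \<sigma>" "s \<le> t"
  interpret prob_space "Nd \<sigma>" using Nd_prob \<open>0 < \<sigma>\<close> by blast
  show ?thesis using \<open>s \<le> t\<close> by (intro finite_measure_mono) auto
qed

lemma Qo_le1: "0 < \<sigma> \<Longrightarrow> Qo \<sigma> t \<le> 1"
proof -
  assume "0 < \<sigma>"
  interpret prob_space "Nd \<sigma>" using Nd_prob \<open>0 < \<sigma>\<close> by blast
  show ?thesis by simp
qed

lemma exp_facts:
  shows "exp (3::real) \<le> 2113/100" "exp (2::real) \<ge> 3" "exp (5::real) \<ge> 32" "exp (2::real) \<le> 8"
proof -
  have e1: "exp (1::real) < 272/100" by (rule e_less_272)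
  have e2: "exp (1::real) \<ge> 2" using exp_ge_add_one_self[of 1] by simp
  have "exp (3::real) = exp 1 ^ 3" by (simp add: exp_of_nat_mult[symmetric])
  also have "\<dots> \<le> (272/100)^3" using e1 by (intro power_mono) auto
  also have "(272/100::real)^3 \<le> 2113/100" by (simp add: power_divide)
  finally show "exp (3::real) \<le> 2113/100" .
  show "exp (2::real) \<ge> 3" using exp_ge_add_one_self[of 2] by simp
  have "exp (5::real) = exp 1 ^ 5" by (simp add: exp_of_nat_mult[symmetric])
  moreover have "(2::real)^5 \<le> exp 1 ^ 5" using e2 by (intro power_mono) auto
  ultimately show "exp (5::real) \<ge> 32" by simp
  have "exp (2::real) = exp 1 ^ 2" by (simp add: exp_of_nat_mult[symmetric])
  also have "\<dots> \<le> (272/100)^2" using e1 by (intro power_mono) auto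
  also have "(272/100::real)^2 \<le> 8" by (simp add: power_divide)
  finally show "exp (2::real) \<le> 8" .
qed

lemma Qo_pos:
  assumes "0 < \<sigma>"
  shows "Qo \<sigma> t > 0"
proof (cases "t \<le> 0")
  case True
  then show ?thesis using Qo_anti[OF assms True] Nd_half[OF assms] by simp
next
  case False
  have "Qo \<sigma> (0 + \<sigma>) \<le> exp (- (0*\<sigma> + \<sigma>\<^sup>2/2) / \<sigma>\<^sup>2) * Qo \<sigma> 0"
    by (rule Nd_upper) (use assms in auto)
  also have "exp (- (0*\<sigma> + \<sigma>\<^sup>2/2) / \<sigma>\<^sup>2) = exp (-1/2)" using assms by (simp add: field_simps)
  finally have h1: "Qo \<sigma> \<sigma> \<le> exp (-1/2) * (1/2)" using Nd_half[OF assms] by simp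
  have "exp (-1/2) < (1::real)" by simp
  with h1 have "Qo \<sigma> \<sigma> < 1/2" by linarith
  then have h2: "Qo \<sigma> 0 - Qo \<sigma> (0 + \<sigma>) > 0" using Nd_half[OF assms] by simp
  have "Qo \<sigma> (0 + t) \<ge> exp (- (t*(0+\<sigma>) + t\<^sup>2/2) / \<sigma>\<^sup>2) * (Qo \<sigma> 0 - Qo \<sigma> (0 + \<sigma>))"
    by (rule Nd_lower) (use assms False in auto)
  moreover have "exp (- (t*(0+\<sigma>) + t\<^sup>2/2) / \<sigma>\<^sup>2) * (Qo \<sigma> 0 - Qo \<sigma> (0 + \<sigma>)) > 0"
    using h2 by simp
  ultimately show ?thesis by simp
qed

lemma exp_nd_le: "(k::real) \<le> X / y \<Longrightarrow> exp (- X / y) \<le> exp (- k)"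
  by (simp only: minus_divide_left[symmetric] exp_le_cancel_iff neg_le_iff_le)

lemma exp_nd_ge: "X / y \<le> (k::real) \<Longrightarrow> exp (- X / y) \<ge> exp (- k)"
  by (simp only: minus_divide_left[symmetric] exp_le_cancel_iff neg_le_iff_le)

lemma trans_mult_le: "(x::real) \<le> e * q \<Longrightarrow> e \<le> k \<Longrightarrow> 0 \<le> q \<Longrightarrow> x \<le> k * q"
  by (meson mult_right_mono order_trans)

lemma trans_mult_ge: "(x::real) \<ge> e * q \<Longrightarrow> e \<ge> k \<Longrightarrow> 0 \<le> q \<Longrightarrow> x \<ge> k * q"
  by (meson mult_right_mono order_trans)

lemma core_numeric:
  fixes \<sigma> r R b d :: real
  assumes s: "0 < \<sigma>" and r: "r \<ge> 2*\<sigma>" and d: "d \<ge> 1"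
    and R: "R \<ge> 5*r/4 + \<sigma> * sqrt (2 * ln (8*d))" and b: "b \<le> r"
  shows "Qo \<sigma> (b + \<sigma>\<^sup>2/r) - 2*d*Qo \<sigma> R \<ge> (1/80) * (if b \<ge> 0 then Qo \<sigma> b else 1)"
proof -
  define a where "a = \<sigma>\<^sup>2/r"
  define sqv where "sqv = sqrt (2 * ln (8*d))"
  have rpos: "r > 0" using s r by simp
  have a0: "a \<ge> 0" using rpos by (simp add: a_def)
  have ar: "a * r = \<sigma>\<^sup>2" using rpos by (simp add: a_def)
  have a2s: "a * (2*\<sigma>) \<le> \<sigma>\<^sup>2"
  proof -
    have "a * (2*\<sigma>) \<le> a * r" using a0 r by (intro mult_left_mono) auto
    then show ?thesis using ar by simp
  qed
  have aa: "a\<^sup>2/2 \<le> \<sigma>\<^sup>2/8"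
  proof -
    have "a \<le> \<sigma>/2" using a2s s by (simp add: power2_eq_square)
    then have "a\<^sup>2 \<le> (\<sigma>/2)\<^sup>2" using a0 by (intro power_mono) auto
    then show ?thesis by (simp add: power_divide)
  qed
  have ln8: "ln (8*d) \<ge> 2"
  proof -
    have "exp 2 \<le> 8*d" using exp_facts(4) d by simp
    then show ?thesis using ln_le_cancel_iff[of "exp 2" "8*d"] d by simp
  qed
  have sqv2: "sqv \<ge> 2"
  proof -
    have "(2::real) = sqrt 4" by simp
    also have "\<dots> \<le> sqv" unfolding sqv_def using ln8 by (intro real_sqrt_le_mono) simp
    finally show ?thesis .
  qed
  have sqvsq: "sqv\<^sup>2 = 2 * ln (8*d)" unfolding sqv_def using ln8 by simp
  define D where "D = R - r"
  have D: "D \<ge> r/4 + \<sigma> * sqv" using R unfolding D_def sqv_def by simp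
  have D0: "D \<ge> \<sigma> * sqv" using D rpos by simp
  have Dsq0: "0 \<le> \<sigma> * sqv" using s sqv2 by simp
  have QR: "Qo \<sigma> R \<le> exp (- (r*D + D\<^sup>2/2) / \<sigma>\<^sup>2) * Qo \<sigma> r"
    using Nd_upper[OF s, of D r] D0 Dsq0 unfolding D_def by simp
  have rD: "r*D \<ge> 5*\<sigma>\<^sup>2"
  proof -
    have "r*D \<ge> r*(r/4 + \<sigma> * sqv)" using D rpos by (intro mult_left_mono) auto
    moreover have "r*r/4 \<ge> \<sigma>\<^sup>2"
    proof -
      have "(2*\<sigma>)*(2*\<sigma>) \<le> r*r" using r s by (intro mult_mono) auto
      then show ?thesis by (simp add: power2_eq_square)
    qed
    moreover have "r*(\<sigma> * sqv) \<ge> (2*\<sigma>)*(\<sigma>*2)" using r s sqv2 by (intro mult_mono) auto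
    ultimately show ?thesis by (simp add: algebra_simps power2_eq_square)
  qed
  have DD: "D\<^sup>2/2 \<ge> \<sigma>\<^sup>2 * ln (8*d)"
  proof -
    have "D\<^sup>2 \<ge> (\<sigma> * sqv)\<^sup>2" using D0 Dsq0 by (intro power_mono) auto
    then show ?thesis using sqvsq by (simp add: power_mult_distrib)
  qed
  have "(r*D + D\<^sup>2/2) / \<sigma>\<^sup>2 \<ge> (5*\<sigma>\<^sup>2 + \<sigma>\<^sup>2 * ln (8*d)) / \<sigma>\<^sup>2"
    using rD DD s by (intro divide_right_mono) auto
  also have "(5*\<sigma>\<^sup>2 + \<sigma>\<^sup>2 * ln (8*d)) / \<sigma>\<^sup>2 = 5 + ln (8*d)" using s by (simp add: field_simps)
  finally have "exp (- (r*D + D\<^sup>2/2) / \<sigma>\<^sup>2) \<le> exp (-(5 + ln (8*d)))" by (rule exp_nd_le)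
  also have "exp (-(5 + ln (8*d))) = exp (-5) / (8*d)" using d by (simp add: exp_diff exp_minus field_simps)
  also have "\<dots> \<le> (1/32) / (8*d)" using exp_facts(3) d by (intro divide_right_mono) (auto simp: exp_minus field_simps)
  finally have "exp (- (r*D + D\<^sup>2/2) / \<sigma>\<^sup>2) \<le> (1/32) / (8*d)" .
  then have "Qo \<sigma> R \<le> (1/32) / (8*d) * Qo \<sigma> r"
    using QR measure_nonneg[of "Nd \<sigma>" "{r<..}"] trans_mult_le by blast
  then have tail: "2*d*Qo \<sigma> R \<le> (1/128) * Qo \<sigma> r"
    using d by (simp add: field_simps)
  have shift: "Qo \<sigma> (c + a) \<ge> exp (- (a*(c + 2*\<sigma>) + a\<^sup>2/2) / \<sigma>\<^sup>2) * ((2/3) * Qo \<sigma> c)" if c0: "0 \<le> c" for c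
  proof -
    have l: "Qo \<sigma> (c + a) \<ge> exp (- (a*(c + 2*\<sigma>) + a\<^sup>2/2) / \<sigma>\<^sup>2) * (Qo \<sigma> c - Qo \<sigma> (c + 2*\<sigma>))"
      by (rule Nd_lower) (use s a0 in auto)
    have up: "Qo \<sigma> (c + 2*\<sigma>) \<le> exp (- (c*(2*\<sigma>) + (2*\<sigma>)\<^sup>2/2) / \<sigma>\<^sup>2) * Qo \<sigma> c"
      by (rule Nd_upper) (use s in auto)
    have "exp (- (c*(2*\<sigma>) + (2*\<sigma>)\<^sup>2/2) / \<sigma>\<^sup>2) \<le> exp (-2)"
    proof -
      have "(c*(2*\<sigma>) + (2*\<sigma>)\<^sup>2/2) / \<sigma>\<^sup>2 \<ge> ((2*\<sigma>)\<^sup>2/2) / \<sigma>\<^sup>2"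
        using c0 s by (intro divide_right_mono) auto
      moreover have "((2*\<sigma>)\<^sup>2/2) / \<sigma>\<^sup>2 = 2" using s by (simp add: power2_eq_square field_simps)
      ultimately show ?thesis by (intro exp_nd_le) simp
    qed
    moreover have "exp (-2::real) \<le> 1/3" using exp_facts(2) by (simp add: exp_minus field_simps)
    ultimately have "exp (- (c*(2*\<sigma>) + (2*\<sigma>)\<^sup>2/2) / \<sigma>\<^sup>2) \<le> 1/3" by linarith
    then have "Qo \<sigma> (c + 2*\<sigma>) \<le> (1/3) * Qo \<sigma> c"
      using up measure_nonneg[of "Nd \<sigma>" "{c<..}"] trans_mult_le by blast
    then have "Qo \<sigma> c - Qo \<sigma> (c + 2*\<sigma>) \<ge> (2/3) * Qo \<sigma> c" by simp
    then show ?thesis using l by (meson exp_ge_zero mult_left_mono order_trans)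
  qed
  have e3: "exp (-3::real) \<ge> 100/2113" using exp_facts(1) by (simp add: exp_minus field_simps)
  have e2: "exp (-2::real) \<ge> 1/8" using exp_facts(4) by (simp add: exp_minus field_simps)
  show ?thesis
  proof (cases "b \<ge> 0")
    case True
    have ex: "(a*(b + 2*\<sigma>) + a\<^sup>2/2) / \<sigma>\<^sup>2 \<le> 3"
    proof -
      have "a*b \<le> a*r" using b a0 by (intro mult_left_mono) auto
      then have "a*(b + 2*\<sigma>) + a\<^sup>2/2 \<le> 3*\<sigma>\<^sup>2" using ar a2s aa by (simp add: algebra_simps) (use zero_le_power2[of \<sigma>] in linarith)
      then show ?thesis using s by (simp add: field_simps)
    qed
    then have "exp (- (a*(b + 2*\<sigma>) + a\<^sup>2/2) / \<sigma>\<^sup>2) \<ge> exp (-3)" by (rule exp_nd_ge)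
    then have "exp (- (a*(b + 2*\<sigma>) + a\<^sup>2/2) / \<sigma>\<^sup>2) \<ge> 100/2113" using e3 by linarith
    then have m: "Qo \<sigma> (b + a) \<ge> (100/2113) * ((2/3) * Qo \<sigma> b)"
      using shift[OF True] measure_nonneg[of "Nd \<sigma>" "{b<..}"]
      using trans_mult_ge[of "exp (- (a*(b + 2*\<sigma>) + a\<^sup>2/2) / \<sigma>\<^sup>2)" "(2/3) * Qo \<sigma> b" "Qo \<sigma> (b + a)" "100/2113"] by simp
    have "Qo \<sigma> r \<le> Qo \<sigma> b" using Qo_anti[OF s b] .
    then show ?thesis using m tail True unfolding a_def by simp (use measure_nonneg[of "Nd \<sigma>" "{b<..}"] in linarith)
  next
    case False
    have ex: "(a*(0 + 2*\<sigma>) + a\<^sup>2/2) / \<sigma>\<^sup>2 \<le> 2"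
    proof -
      have "a*(0 + 2*\<sigma>) + a\<^sup>2/2 \<le> 2*\<sigma>\<^sup>2" using a2s aa s by (simp add: algebra_simps) (use zero_le_power2[of \<sigma>] in linarith)
      then show ?thesis using s by (simp add: field_simps)
    qed
    then have "exp (- (a*(0 + 2*\<sigma>) + a\<^sup>2/2) / \<sigma>\<^sup>2) \<ge> exp (-2)" by (rule exp_nd_ge)
    then have "exp (- (a*(0 + 2*\<sigma>) + a\<^sup>2/2) / \<sigma>\<^sup>2) \<ge> 1/8" using e2 by linarith
    then have m: "Qo \<sigma> (0 + a) \<ge> (1/8) * ((2/3) * Qo \<sigma> 0)"
      using shift[of 0] measure_nonneg[of "Nd \<sigma>" "{0<..}"]
      using trans_mult_ge[of "exp (- (a*(0 + 2*\<sigma>) + a\<^sup>2/2) / \<sigma>\<^sup>2)" "(2/3) * Qo \<sigma> 0" "Qo \<sigma> (0 + a)" "1/8"] by simp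
    have "Qo \<sigma> (b + a) \<ge> Qo \<sigma> (0 + a)" using False by (intro Qo_anti[OF s]) auto
    moreover have "Qo \<sigma> r \<le> Qo \<sigma> 0" using Qo_anti[OF s] rpos by simp
    ultimately show ?thesis using m tail False Nd_half[OF s] unfolding a_def by simp
  qed
qed

definition cN :: "real \<Rightarrow> real \<Rightarrow> real" where
  "cN \<sigma> R = measure (Nd \<sigma>) {-R..R}"

lemma cN_pos:
  assumes "0 < \<sigma>" "0 < R"
  shows "cN \<sigma> R > 0"
proof -
  interpret prob_space "Nd \<sigma>" using Nd_prob assms by blast
  define E where "E = exp (- (0*R + R\<^sup>2/2) / \<sigma>\<^sup>2)"
  have "Qo \<sigma> (0 + R) \<le> E * Qo \<sigma> 0"
    unfolding E_def by (rule Nd_upper) (use assms in auto)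
  then have q1: "Qo \<sigma> R \<le> E * (1/2)" using Nd_half[OF assms(1)] by simp
  have "0 < (0*R + R\<^sup>2/2) / \<sigma>\<^sup>2" using assms by simp
  then have "exp (- ((0*R + R\<^sup>2/2) / \<sigma>\<^sup>2)) < 1" by simp
  then have "E < 1" unfolding E_def by (simp only: minus_divide_left)
  with q1 have q: "Qo \<sigma> R < 1/2" by linarith
  have "UNIV = {..<-R} \<union> ({-R..R} \<union> {R<..})" by auto
  moreover have a: "measure (Nd \<sigma>) ({-R..R} \<union> {R<..}) = measure (Nd \<sigma>) {-R..R} + measure (Nd \<sigma>) {R<..}"
    using assms by (intro finite_measure_Union) auto
  moreover have b: "measure (Nd \<sigma>) ({..<-R} \<union> ({-R..R} \<union> {R<..})) = measure (Nd \<sigma>) {..<-R} + measure (Nd \<sigma>) ({-R..R} \<union> {R<..})"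
    using assms by (intro finite_measure_Union) auto
  ultimately have "1 = measure (Nd \<sigma>) {..<-R} + measure (Nd \<sigma>) {-R..R} + measure (Nd \<sigma>) {R<..}"
    using prob_space by simp
  then show ?thesis using q Nd_reflect[OF assms(1), of R] unfolding cN_def by simp
qed

lemma trunc_eq:
  "trunc_normal \<sigma> R = density (Nd \<sigma>) (\<lambda>x. ennreal (indicator {-R..R} x / cN \<sigma> R))"
  unfolding trunc_normal_def cN_def
  by (subst density_density_eq)
     (auto intro!: arg_cong2[where f=density] ext simp: ennreal_mult'[symmetric] normal_density_nonneg
        measure_nonneg indicator_def)

lemma trunc_prob:
  assumes "0 < \<sigma>" "0 < R"
  shows "prob_space (trunc_normal \<sigma> R)"
proof -
  interpret prob_space "Nd \<sigma>" using Nd_prob assms by blast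
  have c: "cN \<sigma> R > 0" using cN_pos assms .
  show ?thesis
  proof
    have "emeasure (trunc_normal \<sigma> R) (space (trunc_normal \<sigma> R)) = 
      (\<integral>\<^sup>+x. ennreal (indicator {-R..R} x / cN \<sigma> R) \<partial>Nd \<sigma>)"
      unfolding trunc_eq by (subst emeasure_density) auto
    also have "\<dots> = (\<integral>\<^sup>+x. ennreal (1 / cN \<sigma> R) * indicator {-R..R} x \<partial>Nd \<sigma>)"
      by (intro nn_integral_cong) (auto simp: indicator_def)
    also have "\<dots> = ennreal (1 / cN \<sigma> R) * emeasure (Nd \<sigma>) {-R..R}"
      by (subst nn_integral_cmult_indicator) auto
    also have "\<dots> = 1" using c unfolding cN_def
      by (simp add: emeasure_eq_measure ennreal_mult'[symmetric])
    finally show "emeasure (trunc_normal \<sigma> R) (space (trunc_normal \<sigma> R)) = 1" .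
  qed
qed

lemma PT_eq:
  assumes "0 < \<sigma>" "0 < R"
  shows "PiM UNIV (\<lambda>_::'d::finite. trunc_normal \<sigma> R) =
    density (PiM UNIV (\<lambda>_::'d. Nd \<sigma>)) (\<lambda>y. ennreal (\<Prod>i\<in>UNIV. indicator {-R..R} (y i) / cN \<sigma> R))"
proof -
  let ?T = "trunc_normal \<sigma> R"
  let ?G = "PiM UNIV (\<lambda>_::'d. Nd \<sigma>)"
  interpret T: prob_space ?T using trunc_prob assms .
  interpret N: prob_space "Nd \<sigma>" using Nd_prob assms by blast
  interpret PT: product_sigma_finite "\<lambda>_::'d. ?T"
    unfolding product_sigma_finite_def using T.sigma_finite_measure_axioms by simp
  interpret PG: product_sigma_finite "\<lambda>_::'d. Nd \<sigma>"
    unfolding product_sigma_finite_def using N.sigma_finite_measure_axioms by simp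
  have c: "cN \<sigma> R > 0" using cN_pos assms .
  have setsT: "sets ?T = sets borel" unfolding trunc_normal_def by simp
  show ?thesis
  proof (rule PT.PiM_eqI[symmetric])
    show "finite (UNIV::'d set)" by simp
    show "sets (density ?G (\<lambda>y. ennreal (\<Prod>i\<in>UNIV. indicator {-R..R} (y i) / cN \<sigma> R))) = sets (PiM UNIV (\<lambda>_::'d. ?T))"
      by (simp add: setsT cong: sets_PiM_cong)
  next
    fix A :: "'d \<Rightarrow> real set"
    assume A: "\<And>i. i \<in> UNIV \<Longrightarrow> A i \<in> sets ?T"
    have Ab: "A i \<in> sets borel" for i using A[of i] setsT by simp
    have "emeasure (density ?G (\<lambda>y. ennreal (\<Prod>i\<in>UNIV. indicator {-R..R} (y i) / cN \<sigma> R))) (Pi\<^sub>E UNIV A)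
      = (\<integral>\<^sup>+y. ennreal (\<Prod>i\<in>UNIV. indicator {-R..R} (y i) / cN \<sigma> R) * indicator (Pi\<^sub>E UNIV A) y \<partial>?G)"
      using Ab by (subst emeasure_density) (auto intro!: sets_PiM_I_finite)
    also have "\<dots> = (\<integral>\<^sup>+y. (\<Prod>i\<in>UNIV. ennreal (indicator {-R..R} (y i) / cN \<sigma> R) * indicator (A i) (y i)) \<partial>?G)"
    proof (intro nn_integral_cong)
      fix y :: "'d \<Rightarrow> real"
      have "indicator (Pi\<^sub>E UNIV A) y = (\<Prod>i\<in>UNIV. indicator (A i) (y i) :: ennreal)"
      proof (cases "\<forall>i. y i \<in> A i")
        case True
        then show ?thesis by (simp add: indicator_def PiE_def extensional_def)
      next
        case False
        then obtain j where j: "y j \<notin> A j" by auto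
        then have "(\<Prod>i\<in>UNIV. indicator (A i) (y i) :: ennreal) = 0"
          using j by (intro prod_zero bexI[of _ j]) (auto simp: indicator_def)
        then show ?thesis using j by (simp only: \<open>(\<Prod>i\<in>UNIV. _) = 0\<close>) (auto simp: indicator_def PiE_def)
      qed
      moreover have "ennreal (\<Prod>i\<in>UNIV. indicator {-R..R} (y i) / cN \<sigma> R) = (\<Prod>i\<in>UNIV. ennreal (indicator {-R..R} (y i) / cN \<sigma> R))"
        using c by (subst prod_ennreal) auto
      ultimately show "ennreal (\<Prod>i\<in>UNIV. indicator {-R..R} (y i) / cN \<sigma> R) * indicator (Pi\<^sub>E UNIV A) y
         = (\<Prod>i\<in>UNIV. ennreal (indicator {-R..R} (y i) / cN \<sigma> R) * indicator (A i) (y i))"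
        by (simp add: prod.distrib)
    qed
    also have "\<dots> = (\<Prod>i\<in>UNIV. (\<integral>\<^sup>+x. ennreal (indicator {-R..R} x / cN \<sigma> R) * indicator (A i) x \<partial>Nd \<sigma>))"
      using Ab by (intro PG.product_nn_integral_prod) auto
    also have "\<dots> = (\<Prod>i\<in>UNIV. emeasure ?T (A i))"
      unfolding trunc_eq using Ab by (intro prod.cong refl, subst emeasure_density) auto
    finally show "emeasure (density ?G (\<lambda>y. ennreal (\<Prod>i\<in>UNIV. indicator {-R..R} (y i) / cN \<sigma> R))) (Pi\<^sub>E UNIV A)
      = (\<Prod>i\<in>UNIV. emeasure ?T (A i))" .
  qed
qed

lemma G_prob: "0 < \<sigma> \<Longrightarrow> prob_space (PiM UNIV (\<lambda>_::'d::finite. Nd \<sigma>))"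
  by (rule prob_space_PiM) (rule Nd_prob)

lemma space_G: "space (PiM UNIV (\<lambda>_::'d::finite. Nd \<sigma>)) = UNIV"
  by (simp add: space_PiM PiE_UNIV_domain)

lemma G_comp:
  assumes "0 < \<sigma>"
  shows "distr (PiM UNIV (\<lambda>_::'d::finite. Nd \<sigma>)) (Nd \<sigma>) (\<lambda>y. y i) = Nd \<sigma>"
  by (rule distr_PiM_component) (use Nd_prob assms in auto)

lemma G_comp_meas: "(\<lambda>y. y i) \<in> borel_measurable (PiM UNIV (\<lambda>_::'d::finite. Nd \<sigma>))"
  by measurable

lemma G_indep:
  assumes "0 < \<sigma>"
  shows "prob_space.indep_vars (PiM UNIV (\<lambda>_::'d::finite. Nd \<sigma>)) (\<lambda>_. borel) (\<lambda>i y. y i) UNIV"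
proof -
  let ?G = "PiM UNIV (\<lambda>_::'d::finite. Nd \<sigma>)"
  interpret G: prob_space ?G using G_prob assms .
  have d1: "distr ?G borel (\<lambda>y. y i) = Nd \<sigma>" for i
  proof -
    have "distr ?G borel (\<lambda>y. y i) = distr ?G (Nd \<sigma>) (\<lambda>y. y i)"
      by (rule distr_cong) auto
    then show ?thesis using G_comp[OF assms] by simp
  qed
  have "distr ?G (Pi\<^sub>M UNIV (\<lambda>_. borel)) (\<lambda>x. \<lambda>i\<in>UNIV. x i) = ?G"
  proof -
    have "(\<lambda>x::'d \<Rightarrow> real. \<lambda>i\<in>UNIV. x i) = (\<lambda>x. x)" by (auto simp: restrict_def)
    moreover have "distr ?G (Pi\<^sub>M UNIV (\<lambda>_. borel)) (\<lambda>x. x) = ?G"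
      by (rule distr_id2) (auto cong: sets_PiM_cong)
    ultimately show ?thesis by simp
  qed
  also have "\<dots> = Pi\<^sub>M UNIV (\<lambda>i. distr ?G borel (\<lambda>y. y i))"
    using d1 by simp
  finally show ?thesis
    by (subst G.indep_vars_iff_distr_eq_PiM) (auto simp: G_comp_meas)
qed

lemma G_lin:
  assumes "0 < \<sigma>" and u: "(\<Sum>i\<in>UNIV. (u i)\<^sup>2) = (1::real)"
  shows "distr (PiM UNIV (\<lambda>_::'d::finite. Nd \<sigma>)) lborel (\<lambda>y. \<Sum>i\<in>UNIV. u i * y i) = Nd \<sigma>"
proof -
  let ?G = "PiM UNIV (\<lambda>_::'d::finite. Nd \<sigma>)"
  interpret G: prob_space ?G using G_prob assms(1) .
  define J where "J = {i. u i \<noteq> 0}"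
  have Jne: "J \<noteq> {}"
  proof
    assume "J = {}"
    then have "\<And>i. u i = 0" unfolding J_def by auto
    then show False using u by simp
  qed
  have dist1: "distributed ?G lborel (\<lambda>y. y i) (\<lambda>x. ennreal (normal_density 0 \<sigma> x))" for i
  proof -
    have "distr ?G lborel (\<lambda>y. y i) = distr ?G (Nd \<sigma>) (\<lambda>y. y i)"
      by (rule distr_cong) auto
    then have "distr ?G lborel (\<lambda>y. y i) = Nd \<sigma>" using G_comp[OF assms(1)] by simp
    moreover have "(\<lambda>y. y i) \<in> measurable ?G lborel" using G_comp_meas[of i \<sigma>] by simp
    moreover have "(\<lambda>x. ennreal (normal_density 0 \<sigma> x)) \<in> borel_measurable lborel" by simp
    ultimately show ?thesis unfolding distributed_def by simp
  qed
  have dist2: "distributed ?G lborel (\<lambda>y. u i * y i) (\<lambda>x. ennreal (normal_density 0 (\<bar>u i\<bar> * \<sigma>) x))" if "i \<in> J" for i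
    using G.normal_density_affine[OF dist1[of i] assms(1), of "u i" 0] that unfolding J_def by simp
  have ind: "G.indep_vars (\<lambda>_. borel) (\<lambda>i y. u i * y i) J"
  proof -
    have "G.indep_vars (\<lambda>_. borel) (\<lambda>i y. (\<lambda>x. u i * x) (y i)) UNIV"
      by (rule G.indep_vars_compose2[OF G_indep[OF assms(1)]]) auto
    then show ?thesis by (rule G.indep_vars_subset) simp
  qed
  have "distributed ?G lborel (\<lambda>y. \<Sum>i\<in>J. u i * y i) (normal_density (\<Sum>i\<in>J. 0) (sqrt (\<Sum>i\<in>J. (\<bar>u i\<bar> * \<sigma>)\<^sup>2)))"
    by (rule G.sum_indep_normal[OF _ Jne ind]) (use assms(1) dist2 in \<open>auto simp: J_def\<close>)
  moreover have "(\<Sum>i\<in>J. (\<bar>u i\<bar> * \<sigma>)\<^sup>2) = \<sigma>\<^sup>2"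
  proof -
    have "(\<Sum>i\<in>J. (\<bar>u i\<bar> * \<sigma>)\<^sup>2) = (\<Sum>i\<in>UNIV. (u i)\<^sup>2) * \<sigma>\<^sup>2"
      by (subst sum.mono_neutral_left[of UNIV J]) (auto simp: J_def power_mult_distrib sum_distrib_right)
    then show ?thesis using u by simp
  qed
  moreover have "(\<lambda>y. \<Sum>i\<in>J. u i * y i) = (\<lambda>y. \<Sum>i\<in>UNIV. u i * y i)"
    by (intro ext sum.mono_neutral_left) (auto simp: J_def)
  ultimately have "distributed ?G lborel (\<lambda>y. \<Sum>i\<in>UNIV. u i * y i) (normal_density 0 \<sigma>)"
    using assms(1) by simp
  then show ?thesis unfolding distributed_def by simp
qed

lemma G_box:
  assumes "0 < \<sigma>"
  shows "measure (PiM UNIV (\<lambda>_::'d::finite. Nd \<sigma>)) (UNIV - {y. \<forall>i. y i \<in> {-R..R}}) \<le> 2 * real CARD('d) * Qo \<sigma> R"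
proof -
  let ?G = "PiM UNIV (\<lambda>_::'d::finite. Nd \<sigma>)"
  interpret G: prob_space ?G using G_prob assms(1) .
  interpret N: prob_space "Nd \<sigma>" using Nd_prob assms by blast
  have ev: "measure ?G {y. y i \<notin> {-R..R}} \<le> 2 * Qo \<sigma> R" for i
  proof -
    have "measure ?G {y. y i \<notin> {-R..R}} = measure (distr ?G (Nd \<sigma>) (\<lambda>y. y i)) (UNIV - {-R..R})"
    proof -
      have "{y. y i \<notin> {-R..R}} = (\<lambda>y. y i) -` (UNIV - {-R..R}) \<inter> space ?G" by (auto simp: space_G)
      moreover have "(\<lambda>y. y i) \<in> measurable ?G (Nd \<sigma>)" by (rule measurable_component_singleton) simp
      ultimately show ?thesis by (simp add: measure_distr)
    qed
    also have "\<dots> = measure (Nd \<sigma>) (UNIV - {-R..R})" by (simp only: G_comp[OF assms])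
    also have "UNIV - {-R..R} = {..<-R} \<union> {R<..}" by auto
    also have "measure (Nd \<sigma>) ({..<-R} \<union> {R<..}) \<le> measure (Nd \<sigma>) {..<-R} + measure (Nd \<sigma>) {R<..}"
      by (rule measure_Un_le) auto
    finally show ?thesis using Nd_reflect[OF assms, of R] by simp
  qed
  have "UNIV - {y. \<forall>i. y i \<in> {-R..R}} = (\<Union>i. {y::'d\<Rightarrow>real. y i \<notin> {-R..R}})" by auto
  then have "measure ?G (UNIV - {y. \<forall>i. y i \<in> {-R..R}}) \<le> (\<Sum>i\<in>UNIV. measure ?G {y. y i \<notin> {-R..R}})"
  proof -
    have "{y::'d\<Rightarrow>real. y i \<notin> {-R..R}} \<in> sets ?G" for i
    proof -
      have "{y::'d\<Rightarrow>real. y i \<notin> {-R..R}} = (\<lambda>y. y i) -` (UNIV - {-R..R}) \<inter> space ?G" by (auto simp: space_G)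
      then show ?thesis using measurable_sets[OF G_comp_meas[of i \<sigma>], of "UNIV - {-R..R}"] by simp
    qed
    then have "measure ?G (\<Union>i. {y::'d\<Rightarrow>real. y i \<notin> {-R..R}}) \<le> (\<Sum>i\<in>UNIV. measure ?G {y. y i \<notin> {-R..R}})"
      by (intro G.finite_measure_subadditive_finite) auto
    then show ?thesis using \<open>UNIV - _ = _\<close> by simp
  qed
  also have "\<dots> \<le> (\<Sum>i\<in>(UNIV::'d set). 2 * Qo \<sigma> R)" using ev by (intro sum_mono) auto
  also have "\<dots> = 2 * real CARD('d) * Qo \<sigma> R" by simp
  finally show ?thesis .
qed

lemma sets_trunc[measurable_cong]: "sets (trunc_normal \<sigma> R) = sets borel"
  unfolding trunc_normal_def by simp

lemma PT_comp_meas: "(\<lambda>y. y i) \<in> borel_measurable (PiM UNIV (\<lambda>_::'d::finite. trunc_normal \<sigma> R))"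
  by measurable

lemma PT_rel:
  assumes "0 < \<sigma>" "0 < R" and E: "E \<in> sets (PiM UNIV (\<lambda>_::'d::finite. Nd \<sigma>))"
  shows "measure (PiM UNIV (\<lambda>_::'d. trunc_normal \<sigma> R)) E =
    (1 / cN \<sigma> R) ^ CARD('d) * measure (PiM UNIV (\<lambda>_::'d. Nd \<sigma>)) (E \<inter> {y. \<forall>i. y i \<in> {-R..R}})"
proof -
  let ?G = "PiM UNIV (\<lambda>_::'d. Nd \<sigma>)"
  let ?B = "{y::'d\<Rightarrow>real. \<forall>i. y i \<in> {-R..R}}"
  interpret G: prob_space ?G using G_prob assms(1) .
  have c: "cN \<sigma> R > 0" using cN_pos assms(1,2) .
  have Bs: "?B \<in> sets ?G"
  proof -
    have "?B = (\<Inter>i. (\<lambda>y. y i) -` {-R..R} \<inter> space ?G)" by (auto simp: space_G)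
    moreover have "(\<lambda>y. y i) -` {-R..R} \<inter> space ?G \<in> sets ?G" for i
      using measurable_sets[OF G_comp_meas[of i \<sigma>], of "{-R..R}"] by simp
    ultimately show ?thesis by auto
  qed
  have h: "ennreal (\<Prod>i\<in>UNIV. indicator {-R..R} (y i) / cN \<sigma> R) * indicator E y
     = ennreal ((1 / cN \<sigma> R) ^ CARD('d)) * indicator (E \<inter> ?B) y" for y :: "'d \<Rightarrow> real"
  proof (cases "y \<in> ?B")
    case True
    then have "(\<Prod>i\<in>UNIV. indicator {-R..R} (y i) / cN \<sigma> R) = (\<Prod>i\<in>(UNIV::'d set). 1 / cN \<sigma> R)"
      by (intro prod.cong) auto
    then show ?thesis using True by (simp add: indicator_def)
  next
    case False
    then obtain j where "y j \<notin> {-R..R}" by auto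
    then have "(\<Prod>i\<in>UNIV. indicator {-R..R} (y i) / cN \<sigma> R) = 0"
      by (intro prod_zero bexI[of _ j]) auto
    then show ?thesis using False by (simp only: \<open>(\<Prod>i\<in>UNIV. _) = 0\<close>) (simp add: indicator_def)
  qed
  have "emeasure (PiM UNIV (\<lambda>_::'d. trunc_normal \<sigma> R)) E
    = (\<integral>\<^sup>+y. ennreal (\<Prod>i\<in>UNIV. indicator {-R..R} (y i) / cN \<sigma> R) * indicator E y \<partial>?G)"
    unfolding PT_eq[OF assms(1,2)] using E by (subst emeasure_density) auto
  also have "\<dots> = (\<integral>\<^sup>+y. ennreal ((1 / cN \<sigma> R) ^ CARD('d)) * indicator (E \<inter> ?B) y \<partial>?G)"
    by (simp only: h)
  also have "\<dots> = ennreal ((1 / cN \<sigma> R) ^ CARD('d)) * emeasure ?G (E \<inter> ?B)"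
    using E Bs by (subst nn_integral_cmult_indicator) auto
  finally have "emeasure (PiM UNIV (\<lambda>_::'d. trunc_normal \<sigma> R)) E = ennreal ((1 / cN \<sigma> R) ^ CARD('d) * measure ?G (E \<inter> ?B))"
    using c by (simp add: G.emeasure_eq_measure ennreal_mult')
  then show ?thesis
    using c by (simp add: measure_def)
qed

lemma matrix_inv_orth:
  fixes Q :: "real^'d^'d"
  assumes "orthogonal_matrix Q"
  shows "matrix_inv Q = transpose Q"
proof -
  have ex: "Q ** transpose Q = mat 1 \<and> transpose Q ** Q = mat 1"
    using assms unfolding orthogonal_matrix_def by simp
  define A where "A = matrix_inv Q"
  have A: "Q ** A = mat 1 \<and> A ** Q = mat 1"
    unfolding A_def matrix_inv_def by (rule someI[of _ "transpose Q"]) (rule ex)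
  have "A = A ** (Q ** transpose Q)" using ex by simp
  also have "\<dots> = (A ** Q) ** transpose Q" by (simp add: matrix_mul_assoc)
  also have "\<dots> = transpose Q" using A by simp
  finally show ?thesis unfolding A_def .
qed

lemma inner_mv:
  fixes A :: "real^'d^'d"
  shows "w \<bullet> (A *v (\<chi> i. y i)) = (\<Sum>j\<in>UNIV. (w v* A) $ j * y j)"
proof -
  have "w \<bullet> (A *v (\<chi> i. y i)) = (w v* A) \<bullet> (\<chi> i. y i)" by (simp add: dot_lmul_matrix)
  also have "\<dots> = (\<Sum>j\<in>UNIV. (w v* A) $ j * y j)" by (simp add: inner_vec_def)
  finally show ?thesis .
qed

lemma orth_norm:
  fixes Q :: "real^'d^'d"
  assumes "orthogonal_matrix Q"
  shows "(\<Sum>j\<in>UNIV. ((Q *v \<beta>) $ j)\<^sup>2) = (norm \<beta>)\<^sup>2"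
proof -
  have "(\<Sum>j\<in>UNIV. ((Q *v \<beta>) $ j)\<^sup>2) = (Q *v \<beta>) \<bullet> (Q *v \<beta>)"
    by (simp add: inner_vec_def power2_eq_square)
  also have "\<dots> = ((Q *v \<beta>) v* Q) \<bullet> \<beta>" by (simp add: dot_lmul_matrix)
  also have "(Q *v \<beta>) v* Q = (transpose Q ** Q) *v \<beta>"
    by (simp add: matrix_vector_mul_assoc[symmetric])
  also have "\<dots> = \<beta>" using assms unfolding orthogonal_matrix_def by simp
  finally show ?thesis by (simp add: power2_norm_eq_inner)
qed

theorem corollary3:
  fixes \<sigma> r R :: real
  assumes "\<sigma> > 0"
    and "r \<ge> 2 * \<sigma>"
    and "R \<ge> 5 * r / 4 + \<sigma> * sqrt (2 * ln (8 * real CARD('d::finite)))"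
  shows "adversary_has_margins \<sigma> R TYPE('d) r (\<sigma>^2 / r) (1/80)"
  unfolding adversary_has_margins_def has_margins_def
proof (intro allI impI)
  fix Q :: "real^'d^'d" and \<beta> :: "real^'d" and b :: real
  assume orth: "orthogonal_matrix Q" and \<beta>0: "\<beta> \<noteq> 0" and bb: "b \<le> r * norm \<beta>"
  have s: "0 < \<sigma>" using assms(1) .
  have rpos: "0 < r" using assms(1,2) by simp
  define d where "d = real CARD('d)"
  have d1: "d \<ge> 1" unfolding d_def by (simp add: Suc_le_eq)
  have "ln (8 * d) \<ge> 0" using d1 by simp
  then have "sqrt (2 * ln (8 * d)) \<ge> 0" by simp
  then have "\<sigma> * sqrt (2 * ln (8 * d)) \<ge> 0" using s by simp
  moreover have "R \<ge> 5 * r / 4 + \<sigma> * sqrt (2 * ln (8 * d))" using assms(3) unfolding d_def .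
  ultimately have Rpos: "0 < R" using rpos by linarith
  let ?PT = "PiM UNIV (\<lambda>_::'d. trunc_normal \<sigma> R)"
  let ?G = "PiM UNIV (\<lambda>_::'d. Nd \<sigma>)"
  let ?B = "{y::'d\<Rightarrow>real. \<forall>i. y i \<in> {-R..R}}"
  define f where "f = (\<lambda>z::'d\<Rightarrow>real. matrix_inv Q *v (\<chi> i. z i))"
  define v where "v = Q *v \<beta>"
  define n where "n = norm \<beta>"
  define u where "u = (\<lambda>j. v $ j / n)"
  define X where "X = (\<lambda>z::'d\<Rightarrow>real. \<Sum>j\<in>UNIV. u j * z j)"
  define \<alpha> where "\<alpha> = \<sigma>\<^sup>2 / r"
  define b' where "b' = b / n"
  have npos: "0 < n" unfolding n_def using \<beta>0 by simp
  have apos: "0 < \<alpha>" unfolding \<alpha>_def using s rpos by simp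
  have b'r: "b' \<le> r" unfolding b'_def using bb npos by (simp add: divide_le_eq n_def)
  interpret G: prob_space ?G using G_prob s .
  interpret T: prob_space "trunc_normal \<sigma> R" using trunc_prob s Rpos .
  interpret PT: prob_space ?PT by (rule prob_space_PiM) (rule trunc_prob[OF s Rpos])
  have key: "\<beta> \<bullet> f z = n * X z" for z
  proof -
    have "\<beta> \<bullet> f z = (\<Sum>j\<in>UNIV. (\<beta> v* transpose Q) $ j * z j)"
      unfolding f_def matrix_inv_orth[OF orth] by (rule inner_mv)
    also have "\<dots> = (\<Sum>j\<in>UNIV. v $ j * z j)" unfolding v_def by simp
    also have "\<dots> = n * X z" unfolding X_def u_def using npos
      by (simp add: sum_distrib_left)
    finally show ?thesis .
  qed
  have u1: "(\<Sum>j\<in>UNIV. (u j)\<^sup>2) = 1"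
  proof -
    have "(\<Sum>j\<in>UNIV. (u j)\<^sup>2) = (\<Sum>j\<in>UNIV. (v $ j)\<^sup>2) / n\<^sup>2"
      unfolding u_def by (simp add: power_divide sum_divide_distrib)
    also have "\<dots> = 1" unfolding v_def n_def using orth_norm[OF orth, of \<beta>] npos n_def by simp
    finally show ?thesis .
  qed
  have Xmeas: "X \<in> borel_measurable ?G" unfolding X_def by measurable
  have XmeasT: "X \<in> borel_measurable ?PT" unfolding X_def by measurable
  have fmeas: "f \<in> borel_measurable ?PT"
  proof (subst borel_measurable_euclidean_space, intro ballI)
    fix e :: "real^'d" assume "e \<in> Basis"
    have "(\<lambda>z. f z \<bullet> e) = (\<lambda>z. \<Sum>j\<in>UNIV. (e v* matrix_inv Q) $ j * z j)"
      unfolding f_def by (intro ext) (simp add: inner_commute[of _ e] inner_mv)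
    moreover have "(\<lambda>z. \<Sum>j\<in>UNIV. (e v* matrix_inv Q) $ j * z j) \<in> borel_measurable ?PT" by measurable
    ultimately show "(\<lambda>z. f z \<bullet> e) \<in> borel_measurable ?PT" by simp
  qed
  have spPT: "space ?PT = UNIV" by (simp add: space_PiM PiE_UNIV_domain trunc_normal_def)
  define A where "A = {z. X z > b' + \<alpha>}"
  define C where "C = {z. X z \<ge> b'}"
  have AC: "A \<subseteq> C" unfolding A_def C_def using apos by auto
  have As: "A \<in> sets ?G"
  proof -
    have "A = X -` {b' + \<alpha><..} \<inter> space ?G" unfolding A_def by (auto simp: space_G)
    then show ?thesis using measurable_sets[OF Xmeas, of "{b' + \<alpha><..}"] by simp
  qed
  have Cs: "C \<in> sets ?G"
  proof -
    have "C = X -` {b'..} \<inter> space ?G" unfolding C_def by (auto simp: space_G)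
    then show ?thesis using measurable_sets[OF Xmeas, of "{b'..}"] by simp
  qed
  have sPT: "sets ?PT = sets ?G" by (simp add: sets_trunc cong: sets_PiM_cong)
  define D where "D = perturbation_distr \<sigma> R Q"
  have D: "D = distr ?PT borel f" unfolding D_def perturbation_distr_def f_def ..
  have spD: "space D = UNIV" unfolding D by simp
  have m1: "measure D {e \<in> space D. \<beta> \<bullet> e > b + \<sigma>\<^sup>2 / r * norm \<beta> \<and> \<beta> \<bullet> e \<ge> b} = measure ?PT A"
  proof -
    have "{e \<in> space D. \<beta> \<bullet> e > b + \<sigma>\<^sup>2 / r * norm \<beta> \<and> \<beta> \<bullet> e \<ge> b} \<in> sets borel"
      unfolding spD by measurable
    moreover have "f -` {e \<in> space D. \<beta> \<bullet> e > b + \<sigma>\<^sup>2 / r * norm \<beta> \<and> \<beta> \<bullet> e \<ge> b} \<inter> space ?PT = A"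
    proof -
      have "n * X z > b + \<alpha> * n \<and> n * X z \<ge> b \<longleftrightarrow> X z > b' + \<alpha>" for z
      proof -
        have "n * X z > b + \<alpha> * n \<longleftrightarrow> X z > b' + \<alpha>"
          unfolding b'_def using npos by (simp add: field_simps)
        moreover have "X z > b' + \<alpha> \<Longrightarrow> n * X z \<ge> b"
          unfolding b'_def using npos apos by (simp add: field_simps) (use mult_pos_pos[OF apos npos] in linarith)
        ultimately show ?thesis by blast
      qed
      then show ?thesis unfolding A_def spD spPT using key by (auto simp: \<alpha>_def n_def mult.commute)
    qed
    ultimately show ?thesis unfolding D using fmeas by (simp add: measure_distr)
  qed
  have m2: "measure D {e \<in> space D. \<beta> \<bullet> e \<ge> b} = measure ?PT C"
  proof -
    have "{e \<in> space D. \<beta> \<bullet> e \<ge> b} \<in> sets borel"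
      unfolding spD by measurable
    moreover have "f -` {e \<in> space D. \<beta> \<bullet> e \<ge> b} \<inter> space ?PT = C"
    proof -
      have "n * X z \<ge> b \<longleftrightarrow> X z \<ge> b'" for z
        unfolding b'_def using npos by (simp add: field_simps)
      then show ?thesis unfolding C_def spD spPT using key by auto
    qed
    ultimately show ?thesis unfolding D using fmeas by (simp add: measure_distr)
  qed
  define k where "k = (1 / cN \<sigma> R) ^ CARD('d)"
  have kpos: "k > 0" unfolding k_def using cN_pos[OF s Rpos] by simp
  have PA: "measure ?PT A = k * measure ?G (A \<inter> ?B)" unfolding k_def by (rule PT_rel[OF s Rpos As])
  have PC: "measure ?PT C = k * measure ?G (C \<inter> ?B)" unfolding k_def by (rule PT_rel[OF s Rpos Cs])
  have GX: "measure ?G {z. t < X z} = Qo \<sigma> t" for t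
  proof -
    have "measure ?G {z. t < X z} = measure (distr ?G lborel X) {t<..}"
      using Xmeas by (subst measure_distr) (auto simp: space_G vimage_def)
    also have "\<dots> = Qo \<sigma> t" unfolding X_def by (simp only: G_lin[OF s u1])
    finally show ?thesis .
  qed
  have GXc: "measure ?G {z. t \<le> X z} = Qo \<sigma> t" for t
  proof -
    have "measure ?G {z. t \<le> X z} = measure (distr ?G lborel X) {t..}"
      using Xmeas by (subst measure_distr) (auto simp: space_G vimage_def)
    also have "\<dots> = measure (Nd \<sigma>) {t..}" unfolding X_def by (simp only: G_lin[OF s u1])
    also have "\<dots> = Qo \<sigma> t" by (rule Nd_closed[OF s])
    finally show ?thesis .
  qed
  have Bs: "?B \<in> sets ?G"
  proof -
    have "?B = (\<Inter>i. (\<lambda>y. y i) -` {-R..R} \<inter> space ?G)" by (auto simp: space_G)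
    moreover have "(\<lambda>y. y i) -` {-R..R} \<inter> space ?G \<in> sets ?G" for i
      using measurable_sets[OF G_comp_meas[of i \<sigma>], of "{-R..R}"] by simp
    ultimately show ?thesis by auto
  qed
  have lowA: "measure ?G (A \<inter> ?B) \<ge> Qo \<sigma> (b' + \<alpha>) - 2 * d * Qo \<sigma> R"
  proof -
    have "measure ?G A = measure ?G (A \<inter> ?B) + measure ?G (A - ?B)"
      using As Bs by (subst G.finite_measure_Union[symmetric]) (auto intro!: arg_cong[where f="measure ?G"])
    moreover have "measure ?G (A - ?B) \<le> measure ?G (UNIV - ?B)"
      using As Bs sets.compl_sets[OF Bs] by (intro G.finite_measure_mono) (auto simp: space_G)
    moreover have "measure ?G (UNIV - ?B) \<le> 2 * d * Qo \<sigma> R" unfolding d_def by (rule G_box[OF s])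
    moreover have "measure ?G A = Qo \<sigma> (b' + \<alpha>)" unfolding A_def by (rule GX)
    ultimately show ?thesis by linarith
  qed
  have upC: "measure ?G (C \<inter> ?B) \<le> (if b' \<ge> 0 then Qo \<sigma> b' else 1)"
  proof -
    have "measure ?G (C \<inter> ?B) \<le> measure ?G C" using Cs Bs by (intro G.finite_measure_mono) auto
    also have "\<dots> = Qo \<sigma> b'" unfolding C_def by (rule GXc)
    finally show ?thesis by simp
  qed
  have core: "Qo \<sigma> (b' + \<sigma>\<^sup>2/r) - 2*d*Qo \<sigma> R \<ge> (1/80) * (if b' \<ge> 0 then Qo \<sigma> b' else 1)"
    by (rule core_numeric[OF s assms(2) d1 _ b'r]) (use assms(3) in \<open>simp add: d_def\<close>)
  have ifpos: "(if b' \<ge> 0 then Qo \<sigma> b' else 1) > 0" using Qo_pos[OF s] by simp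
  have GA: "measure ?G (A \<inter> ?B) \<ge> (1/80) * measure ?G (C \<inter> ?B)"
    using lowA core upC unfolding \<alpha>_def by linarith
  have GApos: "measure ?G (A \<inter> ?B) > 0" using lowA core ifpos unfolding \<alpha>_def by linarith
  have GCA: "measure ?G (C \<inter> ?B) \<ge> measure ?G (A \<inter> ?B)"
    using AC As Bs Cs by (intro G.finite_measure_mono) auto
  have "cond_prob D (\<lambda>e. \<beta> \<bullet> e > b + \<sigma>\<^sup>2 / r * norm \<beta>) (\<lambda>e. \<beta> \<bullet> e \<ge> b)
      = measure ?G (A \<inter> ?B) / measure ?G (C \<inter> ?B)"
    unfolding cond_prob_def m1 m2 PA PC using kpos by simp
  also have "\<dots> \<ge> 1/80" using GA GApos GCA by (simp add: divide_simps)
  finally show "cond_prob (perturbation_distr \<sigma> R Q) (\<lambda>e. \<beta> \<bullet> e > b + \<sigma>\<^sup>2 / r * norm \<beta>) (\<lambda>e. \<beta> \<bullet> e \<ge> b) \<ge> 1/80"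
    unfolding D_def .
qed

end
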